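(* Let $(K,C,S)$ be the associated layered complex of a divided complex $(K,S^0)$, and let $(K,C,S)\searrow(K-\{f,p\},C,S)$ be an elementary intermediate collapse of a principal simplex $p\in\mathrm{IM}(K,C,S)$ using the free face $f$. Then the freely orthogonal deformation retraction $H:|K|\times I\to|K|$ associated to $p$ and $f$ satisfies $H_t(|K|-|S|)\subseteq|K|-|S|$ and $H_t(|S|)\subseteq|S|$ for all $t\in I$.
   Context: A simplicial complex is a set of finite nonempty sets (simplices) closed under passing to nonempty subsets (faces); $K^0$ is its vertex set; $t<s$ means proper face; $|K|$ is the geometric realization and $|s|$ the closed geometric simplex. A simplex is principal in $K$ if it is not a proper face of any simplex of $K$; $f$ is free in $K$ if it is a proper face of a principal simplex $p$ and of no other simplex of $K$. A layered simplicial complex is $(K,C,S)$ with $C,S$ disjoint subcomplexes; $\mathrm{IM}(K,C,S)$ are the simplices in neither $C$ nor $S$. A divided complex is $(K,S^0)$, $S^0\subseteq K^0$; its associated layered complex has $S$ = simplices with all vertices in $S^0$, $C$ = simplices with all vertices in $K^0-S^0$. An elementary intermediate collapse removes $f,p$ where (i) $p\in\mathrm{IM}(K,C,S)$, (ii) $p$ is principal in $K$, (iii) $f$ is a face of $p$ free in $K$, (iv) every $t\in S$ with $t<p$ satisfies $t<f$. Freely orthogonal deformation retraction: with $v$ the vertex of $p$ not in $f$ and $f_1,\dots,f_m$ the vertices of $f$ ($m\ge1$), identify $|p|$ with $\{x\in\mathbb R^m:x_i\ge0,\sum x_i\le1\}$ ($v\mapsto0$, $f_i\mapsto e_i$); set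 $r(x)=(x_1-x_j,\dots,x_m-x_j)$ with $x_j=\min_i x_i$, and $H(x,t)=(1-t)x+t\,r(x)$ for $x\in|p|$, $H(x,t)=x$ for $x\in|K|-|p|$; $H_t=H(\cdot,t)$. *)

theory Defs
  imports Main "HOL-Analysis.Analysis"
begin

definition simplicial_complex :: "'v set set \<Rightarrow> bool" where
  "simplicial_complex K \<longleftrightarrow>
     (\<forall>s\<in>K. finite s \<and> s \<noteq> {}) \<and>
     (\<forall>s\<in>K. \<forall>t. t \<subseteq> s \<and> t \<noteq> {} \<longrightarrow> t \<in> K)"

definition vertices :: "'v set set \<Rightarrow> 'v set" where
  "vertices K = \<Union>K"

definition subcomplex :: "'v set set \<Rightarrow> 'v set set \<Rightarrow> bool" where
  "subcomplex L K \<longleftrightarrow> L \<subseteq> K \<and> simplicial_complex L"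

definition principal :: "'v set set \<Rightarrow> 'v set \<Rightarrow> bool" where
  "principal K p \<longleftrightarrow> p \<in> K \<and> \<not> (\<exists>s\<in>K. p \<subset> s)"

definition free_face :: "'v set set \<Rightarrow> 'v set \<Rightarrow> 'v set \<Rightarrow> bool" where
  "free_face K f p \<longleftrightarrow> f \<in> K \<and> principal K p \<and> f \<subset> p \<and> (\<forall>s\<in>K. f \<subset> s \<longrightarrow> s = p)"

definition layered_complex :: "'v set set \<Rightarrow> 'v set set \<Rightarrow> 'v set set \<Rightarrow> bool" where
  "layered_complex K C S \<longleftrightarrow> simplicial_complex K \<and> subcomplex C K \<and> subcomplex S K \<and> C \<inter> S = {}"

definition IM :: "'v set set \<Rightarrow> 'v set set \<Rightarrow> 'v set set \<Rightarrow> 'v set set" where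
  "IM K C S = K - C - S"

definition divided_complex :: "'v set set \<Rightarrow> 'v set \<Rightarrow> bool" where
  "divided_complex K S0 \<longleftrightarrow> simplicial_complex K \<and> S0 \<subseteq> vertices K"

definition assoc_S :: "'v set set \<Rightarrow> 'v set \<Rightarrow> 'v set set" where
  "assoc_S K S0 = {s\<in>K. s \<subseteq> S0}"

definition assoc_C :: "'v set set \<Rightarrow> 'v set \<Rightarrow> 'v set set" where
  "assoc_C K S0 = {s\<in>K. s \<subseteq> vertices K - S0}"

definition elementary_intermediate_collapse ::
  "'v set set \<Rightarrow> 'v set set \<Rightarrow> 'v set set \<Rightarrow> 'v set \<Rightarrow> 'v set \<Rightarrow> bool" where
  "elementary_intermediate_collapse K C S f p \<longleftrightarrow>
     layered_complex K C S \<and>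
     p \<in> IM K C S \<and>
     principal K p \<and>
     free_face K f p \<and>
     (\<forall>t\<in>S. t \<subset> p \<longrightarrow> t \<subset> f)"

text \<open>A point of the realization is a function from vertices to reals (barycentric coordinates).
  The closed geometric simplex |s|:\<close>
definition geom_simplex :: "'v set \<Rightarrow> ('v \<Rightarrow> real) set" where
  "geom_simplex s = {x. (\<forall>v. 0 \<le> x v) \<and> (\<forall>v. v \<notin> s \<longrightarrow> x v = 0) \<and> sum x s = 1}"

definition geom_real :: "'v set set \<Rightarrow> ('v \<Rightarrow> real) set" where
  "geom_real K = (\<Union>s\<in>K. geom_simplex s)"

definition apex :: "'v set \<Rightarrow> 'v set \<Rightarrow> 'v" where
  "apex p f = (THE v. v \<in> p - f)"

text \<open>Identification of |p| with the standard simplex in R^f (coordinates indexed by the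
  vertices f_i of f; the apex v goes to 0, f_i to e_i): the coordinates of x are x restricted
  to f; the inverse sends y to the point with barycentric coordinate y w at w in f and
  1 - sum of y over f at the apex.\<close>
definition coords_to_point :: "'v set \<Rightarrow> 'v set \<Rightarrow> ('v \<Rightarrow> real) \<Rightarrow> ('v \<Rightarrow> real)" where
  "coords_to_point p f y =
     (\<lambda>w. if w \<in> f then y w else if w = apex p f then 1 - sum y f else 0)"

definition retr_r :: "'v set \<Rightarrow> ('v \<Rightarrow> real) \<Rightarrow> ('v \<Rightarrow> real)" where
  "retr_r f y = (\<lambda>w. y w - Min (y ` f))"

definition fodr :: "'v set \<Rightarrow> 'v set \<Rightarrow> real \<Rightarrow> ('v \<Rightarrow> real) \<Rightarrow> ('v \<Rightarrow> real)" where
  "fodr p f t x =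
     (if x \<in> geom_simplex p
      then coords_to_point p f (\<lambda>w. (1 - t) * x w + t * retr_r f x w)
      else x)"

end

theory Submission
  imports Defs
begin

lemma gs_supp:
  assumes "x \<in> geom_simplex s" "finite s"
  shows "{w. x w \<noteq> 0} \<subseteq> s" "{w. x w \<noteq> 0} \<noteq> {}" "x \<in> geom_simplex {w. x w \<noteq> 0}"
proof -
  show 1: "{w. x w \<noteq> 0} \<subseteq> s" using assms by (auto simp: geom_simplex_def)
  show "{w. x w \<noteq> 0} \<noteq> {}"
  proof
    assume "{w. x w \<noteq> 0} = {}"
    then have "sum x s = 0" by auto
    then show False using assms by (simp add: geom_simplex_def)
  qed
  have "sum x {w. x w \<noteq> 0} = sum x s"
    by (rule sum.mono_neutral_left[OF assms(2) 1]) auto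
  then show "x \<in> geom_simplex {w. x w \<noteq> 0}" using assms by (auto simp: geom_simplex_def)
qed

lemma real_S_supp:
  assumes "x \<in> geom_real (assoc_S K S0)" "simplicial_complex K"
  shows "{w. x w \<noteq> 0} \<subseteq> S0"
proof -
  obtain s where s: "s \<in> K" "s \<subseteq> S0" "x \<in> geom_simplex s"
    using assms(1) by (auto simp: geom_real_def assoc_S_def)
  have "finite s" using s assms(2) by (auto simp: simplicial_complex_def)
  then show ?thesis using gs_supp(1)[OF s(3)] s by auto
qed

lemma supp_real_S:
  assumes "simplicial_complex K" "x \<in> geom_simplex p" "p \<in> K" "{w. x w \<noteq> 0} \<subseteq> S0"
  shows "x \<in> geom_real (assoc_S K S0)" "{w. x w \<noteq> 0} \<in> assoc_S K S0"
proof -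
  have fp: "finite p" using assms by (auto simp: simplicial_complex_def)
  have "{w. x w \<noteq> 0} \<in> K" using gs_supp[OF assms(2) fp] assms(1,3)
    unfolding simplicial_complex_def by blast
  then show "{w. x w \<noteq> 0} \<in> assoc_S K S0" using assms(4) by (auto simp: assoc_S_def)
  then show "x \<in> geom_real (assoc_S K S0)" using gs_supp(3)[OF assms(2) fp]
    by (auto simp: geom_real_def)
qed

lemma fodr_eq:
  assumes "x \<in> geom_simplex p" "finite p" "p = insert v f" "v \<notin> f"
  shows "fodr p f t x = (\<lambda>w. if w \<in> f then x w - t * Min (x ` f)
           else if w = v then x v + t * Min (x ` f) * card f else 0)"
proof -
  have ap: "apex p f = v" unfolding apex_def using assms(3,4) by auto
  have ff: "finite f" using assms by auto
  have s1: "sum x p = 1" using assms(1) by (simp add: geom_simplex_def)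
  have "sum x p = x v + sum x f" using assms ff by simp
  then have sv: "1 - sum x f = x v" using s1 by simp
  have "sum (\<lambda>w. (1 - t) * x w + t * retr_r f x w) f = sum x f - t * Min (x ` f) * card f"
    by (simp add: retr_r_def algebra_simps sum.distrib sum_subtractf sum_distrib_left)
  then have "1 - sum (\<lambda>w. (1 - t) * x w + t * retr_r f x w) f = x v + t * Min (x ` f) * card f"
    using sv by simp
  then show ?thesis using assms(1)
    by (auto simp: fodr_def coords_to_point_def ap retr_r_def algebra_simps fun_eq_iff)
qed

theorem lemma5p5:
  fixes K :: "'v set set" and S0 :: "'v set" and f p :: "'v set"
  assumes "divided_complex K S0"
    and "elementary_intermediate_collapse K (assoc_C K S0) (assoc_S K S0) f p"
  shows "\<forall>t\<in>{0..1::real}.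
           fodr p f t ` (geom_real K - geom_real (assoc_S K S0)) \<subseteq> geom_real K - geom_real (assoc_S K S0)
         \<and> fodr p f t ` geom_real (assoc_S K S0) \<subseteq> geom_real (assoc_S K S0)"
proof -
  have sc: "simplicial_complex K" using assms(1) by (simp add: divided_complex_def)
  have pK: "p \<in> K" and pnS: "p \<notin> assoc_S K S0" and fK: "f \<in> K" and fp: "f \<subset> p"
    and fr: "\<forall>s\<in>K. f \<subset> s \<longrightarrow> s = p"
    and iv: "\<forall>t\<in>assoc_S K S0. t \<subset> p \<longrightarrow> t \<subset> f"
    using assms(2) by (auto simp: elementary_intermediate_collapse_def IM_def free_face_def principal_def)
  have finp: "finite p" using pK sc by (auto simp: simplicial_complex_def)
  have fne: "f \<noteq> {}" using fK sc by (auto simp: simplicial_complex_def)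
  have finf: "finite f" using fp finp by (meson finite_subset psubset_imp_subset)
  obtain v where v: "v \<in> p" "v \<notin> f" using fp by blast
  have pv: "p = insert v f"
  proof (rule ccontr)
    assume "p \<noteq> insert v f"
    then have sub: "insert v f \<subset> p" using v fp by auto
    have "insert v f \<in> K" using sc pK sub unfolding simplicial_complex_def by blast
    moreover have "f \<subset> insert v f" using v by auto
    ultimately show False using fr sub by auto
  qed
  have cp: "card f > 0" using finf fne by (simp add: card_gt_0_iff)
  have pnS0: "\<not> p \<subseteq> S0" using pnS pK by (auto simp: assoc_S_def)
  have key: "{w. x w \<noteq> 0} \<subset> f" if "x \<in> geom_simplex p" "{w. x w \<noteq> 0} \<subseteq> S0" for x
  proof -
    have "{w. x w \<noteq> 0} \<in> assoc_S K S0" by (rule supp_real_S(2)[OF sc that(1) pK that(2)])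
    moreover have "{w. x w \<noteq> 0} \<subset> p" using gs_supp(1)[OF that(1) finp] that(2) pnS0 by auto
    ultimately show ?thesis using iv by blast
  qed
  have Minnn: "Min (x ` f) \<ge> 0" if "x \<in> geom_simplex p" for x
    using that finf fne by (auto simp: geom_simplex_def)
  have Minle: "Min (x ` f) \<le> x w" if "w \<in> f" for x w
    using that finf by auto
  have fixx: "fodr p f t x = x" if "x \<in> geom_simplex p" "x v = 0" "t * Min (x ` f) = 0" for x t
  proof -
    have "x w = 0" if "w \<notin> p" for w using \<open>x \<in> geom_simplex p\<close> that
      by (auto simp: geom_simplex_def)
    then show ?thesis using fodr_eq[OF that(1) finp pv v(2), of t] that pv
      by (auto simp: fun_eq_iff)
  qed
  have inp: "fodr p f t x \<in> geom_simplex p" if "x \<in> geom_simplex p" "t \<in> {0..1}" for x t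
  proof -
    have m0: "Min (x ` f) \<ge> 0" using Minnn that by auto
    have a: "x w - t * Min (x ` f) \<ge> 0" if "w \<in> f" for w
    proof -
      have "t * Min (x ` f) \<le> 1 * Min (x ` f)" using m0 \<open>t \<in> {0..1}\<close>
        by (intro mult_right_mono) auto
      then show ?thesis using Minle[OF that, of x] by simp
    qed
    have b: "x v + t * Min (x ` f) * card f \<ge> 0" using m0 that
      by (auto simp: geom_simplex_def)
    have "sum (\<lambda>w. x w - t * Min (x ` f)) f = sum x f - t * Min (x ` f) * card f"
      by (simp add: sum_subtractf)
    moreover have "sum x p = x v + sum x f" using pv v finf by simp
    moreover have "sum x p = 1" using that by (simp add: geom_simplex_def)
    moreover have "sum (fodr p f t x) p = x v + t * Min (x ` f) * card f + sum (\<lambda>w. x w - t * Min (x ` f)) f"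
      unfolding fodr_eq[OF that(1) finp pv v(2)] using pv v finf
      by (simp add: sum.cong[of f f "\<lambda>w. if w \<in> f then _ w else _ w"])
    ultimately have "sum (fodr p f t x) p = 1" by simp
    then show ?thesis unfolding geom_simplex_def fodr_eq[OF that(1) finp pv v(2)] using a b pv v
      by auto
  qed
  show ?thesis
  proof (intro ballI conjI subsetI)
    fix t :: real and z assume t: "t \<in> {0..1}"
    {
      assume "z \<in> fodr p f t ` geom_real (assoc_S K S0)"
      then obtain x where x: "x \<in> geom_real (assoc_S K S0)" and z: "z = fodr p f t x" by auto
      show "z \<in> geom_real (assoc_S K S0)"
      proof (cases "x \<in> geom_simplex p")
        case False then show ?thesis using x z by (simp add: fodr_def)
      next
        case True
        have ks: "{w. x w \<noteq> 0} \<subset> f" using key[OF True real_S_supp[OF x sc]] .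
        then have xv: "x v = 0" using v by auto
        obtain w where w: "w \<in> f" "x w = 0" using ks by auto
        have "Min (x ` f) = 0" using Minnn[OF True] Minle[OF w(1), of x] w by simp
        then show ?thesis using fixx[OF True xv] x z by simp
      qed
    }
    {
      assume "z \<in> fodr p f t ` (geom_real K - geom_real (assoc_S K S0))"
      then obtain x where x: "x \<in> geom_real K" "x \<notin> geom_real (assoc_S K S0)" and z: "z = fodr p f t x" by auto
      show "z \<in> geom_real K - geom_real (assoc_S K S0)"
      proof (cases "x \<in> geom_simplex p")
        case False then show ?thesis using x z by (simp add: fodr_def)
      next
        case True
        have zp: "z \<in> geom_simplex p" using inp[OF True t] z by simp
        have "z \<notin> geom_real (assoc_S K S0)"
        proof
          assume zs: "z \<in> geom_real (assoc_S K S0)"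
          have "{w. z w \<noteq> 0} \<subset> f" using key[OF zp real_S_supp[OF zs sc]] .
          then have "z v = 0" using v by auto
          then have e: "x v + t * Min (x ` f) * card f = 0"
            using z fodr_eq[OF True finp pv v(2), of t] v by simp
          have m0: "Min (x ` f) \<ge> 0" using Minnn[OF True] .
          have xv0: "x v \<ge> 0" using True by (simp add: geom_simplex_def)
          have "t * Min (x ` f) * card f \<ge> 0" using m0 t by simp
          then have "x v = 0" "t * Min (x ` f) * card f = 0" using e xv0 by linarith+
          then have "t * Min (x ` f) = 0" using cp by simp
          then have "z = x" using fixx[OF True \<open>x v = 0\<close>] z by simp
          then show False using zs x by simp
        qed
        then show ?thesis using zp pK by (auto simp: geom_real_def)
      qed
    }
  qed
qed

end
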